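(* Let $A>0$, $B\in\mathbb R$, $0<E<|B|$ and $z_\gamma\in\mathbb R\setminus\{0\}$. The set $$\left\{\frac{\sqrt{4\pi A\ell(\pi A\ell-z_\gamma)}}{\sqrt{B^2/E^2-1}}:\ \ell\in\mathbb Z\setminus\{0\},\ \frac{2E}{E-|B|}<\frac{z_\gamma}{\pi A\ell}<\frac{2E}{E+|B|}\right\}$$ is bounded below by $|z_\gamma|$.
   Context: This set is the set of lengths of non-central closed magnetic geodesics of energy $E$ in the free homotopy class of a central element $\exp(z_\gamma Z)$ of a compact quotient of the three-dimensional Heisenberg group with metric parameter $A$ and magnetic parameter $B$; the claim is purely about the displayed set of real numbers. *)

theory Defs
  imports "HOL-Analysis.Analysis"
begin

end

theory Submission
  imports Defs
begin

lemma key: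
  fixes e b u :: real
  assumes "0 < e" "e < b" "2 * e / (e - b) < u" "u < 2 * e / (e + b)"
  shows "u^2 * (b^2 - e^2) \<le> 4 * e^2 * (1 - u)"
proof -
  have h1: "u * (e + b) < 2 * e" using assms by (simp add: less_divide_eq)
  have h2: "2 * e > u * (e - b)" using assms(3) assms(1,2)
    by (simp add: divide_less_eq)
  have "\<bar>u * b\<bar> \<le> 2*e - u*e"
    using h1 h2 by (simp add: algebra_simps abs_le_iff)
  then have "\<bar>u * b\<bar>^2 \<le> (2*e - u*e)^2"
    by (rule power_mono) simp
  then show ?thesis by (simp add: power2_eq_square algebra_simps)
qed

theorem lemma4p15:
  fixes A B E z :: real
  assumes "A > 0" and "0 < E" and "E < \<bar>B\<bar>" and "z \<noteq> 0"
  shows "\<forall>x \<in> {sqrt (4 * pi * A * real_of_int l * (pi * A * real_of_int l - z))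
                      / sqrt (B\<^sup>2 / E\<^sup>2 - 1) | l :: int.
                 l \<noteq> 0 \<and>
                 2 * E / (E - \<bar>B\<bar>) < z / (pi * A * real_of_int l) \<and>
                 z / (pi * A * real_of_int l) < 2 * E / (E + \<bar>B\<bar>)}.
           \<bar>z\<bar> \<le> x"
proof (intro ballI)
  fix x assume "x \<in> {sqrt (4 * pi * A * real_of_int l * (pi * A * real_of_int l - z))
                      / sqrt (B\<^sup>2 / E\<^sup>2 - 1) | l :: int.
                 l \<noteq> 0 \<and>
                 2 * E / (E - \<bar>B\<bar>) < z / (pi * A * real_of_int l) \<and>
                 z / (pi * A * real_of_int l) < 2 * E / (E + \<bar>B\<bar>)}"
  then obtain l :: int where l: "l \<noteq> 0"
    "2 * E / (E - \<bar>B\<bar>) < z / (pi * A * real_of_int l)"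
    "z / (pi * A * real_of_int l) < 2 * E / (E + \<bar>B\<bar>)"
    and x: "x = sqrt (4 * pi * A * real_of_int l * (pi * A * real_of_int l - z))
                      / sqrt (B\<^sup>2 / E\<^sup>2 - 1)" by blast
  define t where "t = pi * A * real_of_int l"
  define u where "u = z / t"
  have t0: "t \<noteq> 0" using l(1) assms(1) by (simp add: t_def)
  have zu: "z = u * t" using t0 by (simp add: u_def)
  have k: "u^2 * (\<bar>B\<bar>^2 - E^2) \<le> 4 * E^2 * (1 - u)"
    using key[of E "\<bar>B\<bar>" u] assms l by (simp add: u_def t_def)
  have B2: "\<bar>B\<bar>^2 = B^2" by simp
  have Yp: "B\<^sup>2 / E\<^sup>2 - 1 > 0"
  proof -
    have "E^2 < \<bar>B\<bar>^2" using assms by (intro power_strict_mono) auto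
    then show ?thesis using assms(2) by simp
  qed
  have "z^2 * (B\<^sup>2 / E\<^sup>2 - 1) = (t^2 / E^2) * (u^2 * (\<bar>B\<bar>^2 - E^2))"
    using assms(2) by (simp add: zu B2 field_simps power2_eq_square)
  also have "\<dots> \<le> (t^2 / E^2) * (4 * E^2 * (1 - u))"
    by (rule mult_left_mono[OF k]) simp
  also have "\<dots> = 4 * pi * A * real_of_int l * (pi * A * real_of_int l - z)"
    using assms(2) by (simp add: zu t_def field_simps power2_eq_square)
  finally have "z^2 \<le> 4 * pi * A * real_of_int l * (pi * A * real_of_int l - z) / (B\<^sup>2 / E\<^sup>2 - 1)"
    using Yp by (simp add: le_divide_eq)
  then have "sqrt (z^2) \<le> sqrt (4 * pi * A * real_of_int l * (pi * A * real_of_int l - z) / (B\<^sup>2 / E\<^sup>2 - 1))"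
    by (rule real_sqrt_le_mono)
  then show "\<bar>z\<bar> \<le> x" by (simp add: x real_sqrt_divide)
qed

end
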